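(* Let $k\ge 2$ and let $p,q$ be real polynomials with $\deg p=k$, $\deg q=k-1$, all of whose roots are real and simple and strictly interlace. For each $\alpha\in\mathbb{R}$ let $p_1(\alpha)<\dots<p_k(\alpha)$ be the roots of $p+\alpha q$ (these are real and simple), let $D_j(\alpha)$ ($1\le j\le k-1$) be the open disk having $[p_j(\alpha),p_{j+1}(\alpha)]$ as a diameter, $D_0(\alpha)$ the open disk having $[p_1(\alpha),p_k(\alpha)]$ as a diameter, and $\Omega_p(\alpha)=\overline{D_0(\alpha)}\setminus\bigcup_{j=1}^{k-1}D_j(\alpha)$. Then all roots of $W(p,q)=p'q-q'p$ lie in $\bigcap_{\alpha\in\mathbb{R}}\Omega_p(\alpha)$.
   Context: "Strictly interlace" means that between any two consecutive roots of $p$ there is exactly one root of $q$ and vice versa: $p_1<q_1<p_2<\dots<q_{k-1}<p_k$. A disk "having a segment $[a,b]$ as a diameter" is the disk centered at $\frac{a+b}2$ of radius $\frac{b-a}2$. *)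

theory Defs
  imports "HOL-Analysis.Analysis" "HOL-Computational_Algebra.Polynomial"
begin

definition real_simple_rooted :: "real poly \<Rightarrow> bool" where
  "real_simple_rooted p \<longleftrightarrow> p \<noteq> 0 \<and>
     (\<forall>z. poly (map_poly complex_of_real p) z = 0 \<longrightarrow> Im z = 0) \<and>
     (\<forall>x. poly p x = 0 \<longrightarrow> order x p = 1)"

definition sorted_roots :: "real poly \<Rightarrow> real list" where
  "sorted_roots p = sorted_list_of_set {x. poly p x = 0}"

definition strictly_interlace :: "real poly \<Rightarrow> real poly \<Rightarrow> bool" where
  "strictly_interlace p q \<longleftrightarrow>
     (let ps = sorted_roots p; qs = sorted_roots q in
       length qs + 1 = length ps \<and>
       (\<forall>i < length qs. ps ! i < qs ! i \<and> qs ! i < ps ! (i + 1)))"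

definition diam_disk :: "real \<Rightarrow> real \<Rightarrow> complex set" where
  "diam_disk a b = ball (complex_of_real ((a + b) / 2)) ((b - a) / 2)"

(* Omega_p(alpha) = closure D_0 minus union of D_j, with r = sorted roots of p + alpha q
   (0-based indices: r!0 = p_1, r!(k-1) = p_k) *)
definition Omega :: "real poly \<Rightarrow> real poly \<Rightarrow> real \<Rightarrow> complex set" where
  "Omega p q \<alpha> =
     (let r = sorted_roots (p + smult \<alpha> q); k = length r in
       closure (diam_disk (r ! 0) (r ! (k - 1))) -
       (\<Union>j \<in> {0..<k - 1}. diam_disk (r ! j) (r ! (j + 1))))"

definition wronskian :: "real poly \<Rightarrow> real poly \<Rightarrow> real poly" where
  "wronskian p q = pderiv p * q - pderiv q * p"

end

theory Submission
  imports Defs "HOL-Computational_Algebra.Fundamental_Theorem_Algebra"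
begin


abbreviation cp :: "real poly \<Rightarrow> complex poly" where "cp \<equiv> map_poly complex_of_real"

lemma cp_add: "cp (p + q) = cp p + cp q"
  by (rule poly_eqI) (simp add: coeff_map_poly)

lemma cp_mult: "cp (p * q) = cp p * cp q"
  by (rule poly_eqI) (simp add: coeff_map_poly coeff_mult)

lemma cp_smult: "cp (smult c p) = smult (of_real c) (cp p)"
  by (rule poly_eqI) (simp add: coeff_map_poly)

lemma cp_sum: "cp (sum f A) = (\<Sum>x\<in>A. cp (f x))"
  by (induction A rule: infinite_finite_induct) (simp_all add: cp_add)

lemma cp_prod: "cp (prod f A) = (\<Prod>x\<in>A. cp (f x))"
  by (induction A rule: infinite_finite_induct) (simp_all add: cp_mult)

lemma cp_lin: "cp [:-t, 1:] = [:- complex_of_real t, 1:]"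
  by (simp add: map_poly_pCons)

lemma cp_power: "cp (p ^ n) = cp p ^ n"
  by (induction n) (simp_all add: cp_mult)

lemma poly_cp_real: "poly (cp p) (complex_of_real x) = complex_of_real (poly p x)"
  by (induction p) (auto simp: map_poly_pCons)

lemma prod_lin_dvd:
  fixes P :: "real poly"
  assumes "finite R" "\<forall>t\<in>R. poly P t = 0"
  shows "(\<Prod>t\<in>R. [:-t,1:]) dvd P"
  using assms
proof (induction R arbitrary: P rule: finite_induct)
  case empty then show ?case by simp
next
  case (insert a R)
  have "[:-a,1:] dvd P" using insert.prems by (simp add: dvd_iff_poly_eq_0)
  then obtain P' where P': "P = [:-a,1:] * P'" by (elim dvdE)
  have "\<forall>t\<in>R. poly P' t = 0"
  proof
    fix t assume t: "t \<in> R"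
    hence "t \<noteq> a" using insert.hyps by auto
    moreover have "poly P t = 0" using insert.prems t by simp
    ultimately show "poly P' t = 0" unfolding P' by simp
  qed
  hence "(\<Prod>t\<in>R. [:-t,1:]) dvd P'" by (rule insert.IH)
  hence "[:-a,1:] * (\<Prod>t\<in>R. [:-t,1:]) dvd [:-a,1:] * P'" by (rule mult_dvd_mono[OF dvd_refl])
  thus ?case using insert.hyps P' by simp
qed

lemma degree_prod_lin: "finite R \<Longrightarrow> degree (\<Prod>t\<in>R. [:-t,1::real:]) = card R"
  by (subst degree_prod_eq_sum_degree) auto

lemma lead_prod_lin: "lead_coeff (\<Prod>t\<in>R. [:-t,1::real:]) = 1"
  by (simp add: lead_coeff_prod)

lemma prod_lin_nz: "(\<Prod>t\<in>R. [:-t,1::real:]) \<noteq> 0"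
  by (metis lead_prod_lin leading_coeff_0_iff one_neq_zero)

lemma factor_full:
  fixes P :: "real poly"
  assumes "P \<noteq> 0" "card {x. poly P x = 0} = degree P"
  shows "P = smult (lead_coeff P) (\<Prod>t\<in>{x. poly P x = 0}. [:-t,1:])"
proof -
  define R where "R = {x. poly P x = 0}"
  have fin: "finite R" using poly_roots_finite[OF assms(1)] by (simp add: R_def)
  have "(\<Prod>t\<in>R. [:-t,1:]) dvd P" by (rule prod_lin_dvd[OF fin]) (simp add: R_def)
  then obtain g where g: "P = (\<Prod>t\<in>R. [:-t,1:]) * g" by (elim dvdE)
  have g0: "g \<noteq> 0" using assms(1) g by auto
  have "degree P = card R + degree g" unfolding g
    by (subst degree_mult_eq[OF prod_lin_nz g0]) (simp add: degree_prod_lin[OF fin])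
  hence "degree g = 0" using assms(2) R_def by simp
  then obtain c where c: "g = [:c:]" by (elim degree_eq_zeroE)
  have lc: "lead_coeff P = c" unfolding g c lead_coeff_mult lead_prod_lin by simp
  have e: "P = smult c (\<Prod>t\<in>R. [:-t,1:])" using g c by simp
  show ?thesis unfolding R_def[symmetric] lc by (rule e)
qed

lemma rsr_card:
  assumes rsr: "real_simple_rooted p"
  shows "card {x. poly p x = 0} = degree p"
proof -
  define R where "R = {x. poly p x = 0}"
  have p0: "p \<noteq> 0" using rsr by (simp add: real_simple_rooted_def)
  have fin: "finite R" using poly_roots_finite[OF p0] by (simp add: R_def)
  have "(\<Prod>t\<in>R. [:-t,1:]) dvd p" by (rule prod_lin_dvd[OF fin]) (simp add: R_def)
  then obtain g where g: "p = (\<Prod>t\<in>R. [:-t,1:]) * g" by (elim dvdE)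
  have g0: "g \<noteq> 0" using p0 g by auto
  have dg: "degree p = card R + degree g" unfolding g
    by (subst degree_mult_eq[OF prod_lin_nz g0]) (simp add: degree_prod_lin[OF fin])
  have "degree g = 0"
  proof (rule ccontr)
    assume "degree g \<noteq> 0"
    hence "degree (cp g) > 0" by (simp add: degree_map_poly)
    then obtain z where z: "poly (cp g) z = 0" using alg_closed_imp_poly_has_root by blast
    have "poly (cp p) z = 0" unfolding g cp_mult using z by simp
    hence "Im z = 0" using rsr by (simp add: real_simple_rooted_def)
    hence zx: "z = complex_of_real (Re z)" by (simp add: complex_eq_iff)
    define x where "x = Re z"
    have gx: "poly g x = 0" using z zx poly_cp_real[of g x] by (simp add: x_def)
    hence px: "poly p x = 0" unfolding g by simp
    hence xR: "x \<in> R" by (simp add: R_def)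
    have ord: "order x p = 1" using rsr px by (simp add: real_simple_rooted_def)
    obtain g' where g': "g = [:-x,1:] * g'" using gx by (metis dvdE dvd_iff_poly_eq_0 minus_minus)
    have pe: "(\<Prod>t\<in>R. [:-t,1:]) = [:-x,1:] * (\<Prod>t\<in>R-{x}. [:-t,1:])"
      using xR fin by (simp add: prod.remove)
    have "p = [:-x,1:]^Suc 1 * ((\<Prod>t\<in>R-{x}. [:-t,1:]) * g')" unfolding g g' pe
      by (simp only: power_Suc power_0 mult_1_right power_one_right mult_ac)
    hence "[:-x,1:]^Suc 1 dvd p" by (metis dvd_triv_left)
    hence "[:-x,1:]^Suc (order x p) dvd p" unfolding ord .
    thus False using order_2[OF p0] by blast
  qed
  thus ?thesis using dg by (simp add: R_def)
qed

lemma prod_sign: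
  fixes R :: "real set"
  assumes "finite R" "x \<notin> R"
  shows "(\<Prod>t\<in>R. x - t) * (-1)^card {t\<in>R. x < t} > 0"
  using assms
proof (induction R rule: finite_induct)
  case empty then show ?case by simp
next
  case (insert a R)
  have xa: "x \<noteq> a" "x \<notin> R" using insert.prems by auto
  have IH: "(\<Prod>t\<in>R. x - t) * (-1)^card {t\<in>R. x < t} > 0" using insert.IH xa by simp
  have fin: "finite {t\<in>R. x < t}" using insert.hyps by simp
  show ?case
  proof (cases "x < a")
    case True
    have "{t\<in>insert a R. x < t} = insert a {t\<in>R. x < t}" using True by auto
    hence "card {t\<in>insert a R. x < t} = Suc (card {t\<in>R. x < t})" using insert.hyps fin by simp
    moreover have "(a - x) * ((\<Prod>t\<in>R. x - t) * (-1)^card {t\<in>R. x < t}) > 0"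
      using True IH by simp
    ultimately show ?thesis using insert.hyps by (simp add: algebra_simps)
  next
    case False
    hence "x > a" using xa by simp
    have "{t\<in>insert a R. x < t} = {t\<in>R. x < t}" using False by auto
    moreover have "(x - a) * ((\<Prod>t\<in>R. x - t) * (-1)^card {t\<in>R. x < t}) > 0"
      using \<open>x > a\<close> IH by simp
    ultimately show ?thesis using insert.hyps by (simp add: algebra_simps)
  qed
qed

definition Pt :: "real set \<Rightarrow> real \<Rightarrow> real poly" where
  "Pt R t = (\<Prod>u\<in>R-{t}. [:-u,1:])"

lemma poly_Pt: "poly (Pt R t) x = (\<Prod>u\<in>R-{t}. x - u)"
  by (simp add: Pt_def poly_prod)

lemma poly_Pt_self: "finite R \<Longrightarrow> poly (Pt R t) t \<noteq> 0"
  by (simp add: poly_Pt)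

lemma poly_Pt_other: "finite R \<Longrightarrow> s \<in> R \<Longrightarrow> s \<noteq> t \<Longrightarrow> poly (Pt R t) s = 0"
  by (simp add: poly_Pt prod_zero_iff)

lemma degree_Pt: "finite R \<Longrightarrow> t \<in> R \<Longrightarrow> degree (Pt R t) = card R - 1"
  unfolding Pt_def by (simp add: degree_prod_lin)

lemma Pt_split: "finite R \<Longrightarrow> t \<in> R \<Longrightarrow> (\<Prod>u\<in>R. [:-u,1:]) = [:-t,1:] * Pt R t"
  unfolding Pt_def by (simp add: prod.remove)

lemma pderiv_sum': "pderiv (sum f A) = (\<Sum>x\<in>A. pderiv (f x))"
  by (induction A rule: infinite_finite_induct) (simp_all add: pderiv_add)

lemma wr_sum_right:
  "wronskian P (\<Sum>t\<in>A. smult (c t) (f t)) = (\<Sum>t\<in>A. smult (c t) (wronskian P (f t)))"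
  unfolding wronskian_def pderiv_sum'
  by (simp add: pderiv_smult sum_distrib_left sum_distrib_right smult_diff_right flip: sum_subtractf)

lemma wr_lin:
  assumes "finite R" "t \<in> R" "P = smult L (\<Prod>u\<in>R. [:-u,1:])"
  shows "wronskian P (Pt R t) = smult L ((Pt R t)^2)"
proof -
  have P: "P = smult L ([:-t,1:] * Pt R t)" using assms Pt_split by simp
  have d: "pderiv ([:-t,1:] * Pt R t) = Pt R t + [:-t,1:] * pderiv (Pt R t)"
  proof -
    have "pderiv [:-t,1::real:] = 1" by (simp add: pderiv_pCons)
    thus ?thesis by (simp only: pderiv_mult mult_1_right add.commute)
  qed
  have gen: "smult L (A + X * B) * A - B * smult L (X * A) = smult L (A^2)" for A B X :: "real poly"
    by (simp add: algebra_simps power2_eq_square smult_add_right)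
  show ?thesis unfolding P wronskian_def pderiv_smult d by (rule gen)
qed

lemma lagrange:
  assumes fin: "finite R" and dQ: "degree Q < card R"
  shows "Q = (\<Sum>t\<in>R. smult (poly Q t / poly (Pt R t) t) (Pt R t))"
proof (rule ccontr)
  define G where "G = (\<Sum>t\<in>R. smult (poly Q t / poly (Pt R t) t) (Pt R t))"
  assume "Q \<noteq> (\<Sum>t\<in>R. smult (poly Q t / poly (Pt R t) t) (Pt R t))"
  hence nz: "Q - G \<noteq> 0" by (simp add: G_def)
  have "degree G \<le> card R - 1" unfolding G_def
    by (rule degree_sum_le[OF fin]) (metis degree_Pt degree_smult_le fin order.trans)
  moreover have "degree (Q - G) \<le> max (degree Q) (degree G)" by (rule degree_diff_le_max)
  ultimately have dg: "degree (Q - G) < card R" using dQ by linarith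
  have roots: "R \<subseteq> {x. poly (Q - G) x = 0}"
  proof
    fix s assume sR: "s \<in> R"
    have "poly G s = (\<Sum>t\<in>R. poly Q t / poly (Pt R t) t * poly (Pt R t) s)"
      by (simp add: G_def poly_sum)
    also have "\<dots> = poly Q s / poly (Pt R s) s * poly (Pt R s) s"
    proof -
      have "(\<Sum>t\<in>R-{s}. poly Q t / poly (Pt R t) t * poly (Pt R t) s) = 0"
        by (rule sum.neutral) (use poly_Pt_other[OF fin sR] in auto)
      thus ?thesis by (simp add: sum.remove[OF fin sR])
    qed
    also have "\<dots> = poly Q s" using poly_Pt_self[OF fin] by simp
    finally show "s \<in> {x. poly (Q - G) x = 0}" by simp
  qed
  have "card R \<le> card {x. poly (Q - G) x = 0}"
    by (rule card_mono[OF poly_roots_finite[OF nz] roots])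
  also have "\<dots> \<le> degree (Q - G)" by (rule card_poly_roots_bound[OF nz])
  finally show False using dg by simp
qed

lemma wr_decomp:
  assumes fin: "finite R" and P: "P = smult L (\<Prod>u\<in>R. [:-u,1:])" and dQ: "degree Q < card R"
  shows "wronskian P Q = (\<Sum>t\<in>R. smult (L * (poly Q t / poly (Pt R t) t)) ((Pt R t)^2))"
proof -
  have "wronskian P Q = wronskian P (\<Sum>t\<in>R. smult (poly Q t / poly (Pt R t) t) (Pt R t))"
    using lagrange[OF fin dQ] by simp
  also have "\<dots> = (\<Sum>t\<in>R. smult (poly Q t / poly (Pt R t) t) (wronskian P (Pt R t)))"
    by (rule wr_sum_right)
  also have "\<dots> = (\<Sum>t\<in>R. smult (L * (poly Q t / poly (Pt R t) t)) ((Pt R t)^2))"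
    by (rule sum.cong[OF refl]) (simp add: wr_lin[OF fin _ P] mult.commute)
  finally show ?thesis .
qed



lemma right_root_pos:
  fixes P :: "real poly"
  assumes "poly P a < 0" "lead_coeff P > 0"
  shows "\<exists>x>a. poly P x = 0"
proof -
  obtain n where n: "\<forall>x\<ge>n. poly P x \<ge> lead_coeff P" using poly_pinfty_gt_lc[OF assms(2)] by blast
  define b where "b = max n (a+1)"
  have "poly P b \<ge> lead_coeff P" using n by (simp add: b_def)
  hence "poly P b > 0" using assms(2) by linarith
  moreover have "a < b" by (simp add: b_def)
  ultimately show ?thesis using poly_IVT_pos[of a b P] assms(1) by auto
qed

lemma right_root:
  fixes P :: "real poly"
  assumes "poly P a * lead_coeff P < 0"
  shows "\<exists>x>a. poly P x = 0"
proof (cases "lead_coeff P > 0")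
  case True
  hence "poly P a < 0" using assms by (simp add: mult_less_0_iff)
  thus ?thesis using right_root_pos True by blast
next
  case False
  hence l: "lead_coeff (-P) > 0" using assms by (simp add: lead_coeff_minus mult_less_0_iff)
  hence "poly (-P) a < 0" using assms by (simp add: mult_less_0_iff lead_coeff_minus)
  thus ?thesis using right_root_pos[OF _ l] by auto
qed

lemma left_root:
  fixes P :: "real poly"
  assumes "poly P a * lead_coeff P * (-1)^degree P < 0"
  shows "\<exists>x<a. poly P x = 0"
proof -
  define Q where "Q = pcompose P [:0,-1:]"
  have pQ: "poly Q y = poly P (-y)" for y by (simp add: Q_def poly_pcompose)
  have lQ: "lead_coeff Q = lead_coeff P * (-1)^degree P"
    unfolding Q_def by (subst lead_coeff_comp) auto
  have "poly Q (-a) * lead_coeff Q < 0" using assms by (simp add: pQ lQ mult.assoc)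
  then obtain y where "y > -a" "poly Q y = 0" using right_root by blast
  thus ?thesis by (intro exI[of _ "-y"]) (auto simp: pQ)
qed

lemma opp_sign:
  fixes a b c :: real
  assumes "a * c < 0" "b * c > 0"
  shows "a * b < 0"
proof (rule ccontr)
  assume "\<not> a * b < 0"
  hence "a * b \<ge> 0" by simp
  hence "(a * b) * (c * c) \<ge> 0" by simp
  moreover have "(a*c) * (b*c) < 0" using assms by (simp add: mult_neg_pos)
  ultimately show False by (simp add: mult_ac)
qed

lemma root_count:
  fixes P :: "real poly" and S :: "real set"
  assumes finS: "finite S" and cardS: "card S = k - 1" and k2: "k \<ge> 2" and dP: "degree P = k"
    and sg: "\<forall>s\<in>S. poly P s * lead_coeff P * (-1)^card {u\<in>S. s < u} < 0"
  shows "k \<le> card {x. poly P x = 0}"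
proof -
  have P0: "P \<noteq> 0" using dP k2 by auto
  have Sne: "S \<noteq> {}" using cardS k2 by auto
  have step: "\<exists>x. x < s \<and> poly P x = 0 \<and> (\<forall>u\<in>S. u < s \<longrightarrow> u < x)" if sS: "s \<in> S" for s
  proof (cases "\<exists>u\<in>S. u < s")
    case True
    define B where "B = {u\<in>S. u < s}"
    have finB: "finite B" "B \<noteq> {}" using finS True by (auto simp: B_def)
    define s' where "s' = Max B"
    have s'B: "s' \<in> B" using finB by (simp add: s'_def)
    hence s'S: "s' \<in> S" and s's: "s' < s" by (auto simp: B_def)
    have s'max: "u \<le> s'" if "u \<in> S" "u < s" for u using finB that by (simp add: s'_def B_def)
    have eqset: "{u\<in>S. s' < u} = insert s {u\<in>S. s < u}"
      using s's sS s'max by force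
    have cs: "card {u\<in>S. s' < u} = Suc (card {u\<in>S. s < u})"
      unfolding eqset using finS by (subst card_insert_disjoint) auto
    define e where "e = (-1::real)^card {u\<in>S. s < u}"
    have A: "poly P s * (lead_coeff P * e) < 0" using sg sS by (simp add: e_def mult.assoc)
    have "poly P s' * lead_coeff P * (-1)^card {u\<in>S. s' < u} < 0" using sg s'S by blast
    hence "poly P s' * lead_coeff P * (- e) < 0" unfolding cs e_def by simp
    hence B: "poly P s' * (lead_coeff P * e) > 0" by (simp add: mult.assoc)
    have "poly P s * poly P s' < 0" by (rule opp_sign[OF A B])
    from poly_IVT[OF s's, of P] this obtain x where x: "s' < x" "x < s" "poly P x = 0"
      by (auto simp: mult.commute)
    show ?thesis using x s'max by (intro exI[of _ x]) force
  next
    case False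
    have "{u\<in>S. s < u} = S - {s}" using False by force
    hence "card {u\<in>S. s < u} = k - 2" using cardS finS sS by simp
    moreover have "poly P s * lead_coeff P * (-1)^card {u\<in>S. s < u} < 0" using sg sS by blast
    ultimately have "poly P s * lead_coeff P * (-1)^(k-2) < 0" by simp
    moreover have "(-1::real)^k = (-1)^(k-2)"
    proof -
      have "k = (k-2) + 2" using k2 by simp
      hence "(-1::real)^k = (-1)^(k-2) * (-1)^2" by (metis power_add)
      thus ?thesis by simp
    qed
    ultimately have "poly P s * lead_coeff P * (-1)^degree P < 0" using dP by simp
    then obtain x where "x < s" "poly P x = 0" using left_root by blast
    thus ?thesis using False by blast
  qed
  then obtain g where g: "\<forall>s\<in>S. g s < s \<and> poly P (g s) = 0 \<and> (\<forall>u\<in>S. u < s \<longrightarrow> u < g s)"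
    by metis
  define smax where "smax = Max S"
  have smaxS: "smax \<in> S" using finS Sne by (simp add: smax_def)
  have smax_ge: "s \<le> smax" if "s \<in> S" for s using finS that by (simp add: smax_def)
  have "{u\<in>S. smax < u} = {}" using smax_ge by force
  hence c0: "card {u\<in>S. smax < u} = 0" by (simp only: card.empty)
  have "poly P smax * lead_coeff P * (-1)^card {u\<in>S. smax < u} < 0" using sg smaxS by blast
  hence "poly P smax * lead_coeff P < 0" by (simp only: c0 power_0 mult_1_right)
  then obtain xr where xr: "xr > smax" "poly P xr = 0" using right_root by blast
  have inj: "inj_on g S"
  proof (rule inj_onI)
    fix s1 s2 assume s: "s1 \<in> S" "s2 \<in> S" "g s1 = g s2"
    show "s1 = s2"
    proof (rule ccontr)
      assume "s1 \<noteq> s2"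
      hence "s1 < s2 \<or> s2 < s1" by auto
      thus False
      proof
        assume "s1 < s2"
        hence "g s1 < g s2" using g s by (meson order.strict_trans)
        thus False using s by simp
      next
        assume "s2 < s1"
        hence "g s2 < g s1" using g s by (meson order.strict_trans)
        thus False using s by simp
      qed
    qed
  qed
  have xrn: "xr \<notin> g ` S"
  proof
    assume "xr \<in> g ` S"
    then obtain s where "s \<in> S" "xr = g s" by blast
    thus False using g smax_ge xr by (meson leD less_le_trans order.strict_trans)
  qed
  have sub: "insert xr (g ` S) \<subseteq> {x. poly P x = 0}" using g xr by auto
  have "card (insert xr (g ` S)) = k"
    using xrn finS inj cardS k2 by (simp add: card_image)
  thus ?thesis using card_mono[OF poly_roots_finite[OF P0] sub] by simp
qed



lemma ss_less_iff:
  fixes xs :: "real list"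
  assumes "sorted_wrt (<) xs" "i < length xs" "j < length xs"
  shows "xs!i < xs!j \<longleftrightarrow> i < j"
proof
  assume h: "xs!i < xs!j"
  show "i < j"
  proof (rule ccontr)
    assume "\<not> i < j"
    hence "j < i \<or> j = i" by auto
    thus False
    proof
      assume "j < i" thus False using sorted_wrt_nth_less[OF assms(1) _ assms(2)] h by force
    qed (use h in simp)
  qed
next
  assume "i < j" thus "xs!i < xs!j" using sorted_wrt_nth_less[OF assms(1) _ assms(3)] by blast
qed

lemma ss_le_iff:
  fixes xs :: "real list"
  assumes "sorted_wrt (<) xs" "i < length xs" "j < length xs"
  shows "xs!i \<le> xs!j \<longleftrightarrow> i \<le> j"
  using ss_less_iff[OF assms(1) assms(3) assms(2)] by (simp add: not_less[symmetric])

lemma count_above: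
  fixes xs :: "real list"
  assumes ss: "sorted_wrt (<) xs" and j: "j < length xs"
  shows "card {a\<in>set xs. xs!j < a} = length xs - 1 - j"
proof -
  have dist: "distinct xs" using ss by (simp add: strict_sorted_iff)
  have "{a\<in>set xs. xs!j < a} = (!) xs ` {j<..<length xs}"
  proof
    show "{a\<in>set xs. xs!j < a} \<subseteq> (!) xs ` {j<..<length xs}"
    proof
      fix a assume "a \<in> {a\<in>set xs. xs!j < a}"
      hence "a \<in> set xs" "xs!j < a" by auto
      then obtain i where i: "i < length xs" "a = xs!i" "xs!j < xs!i" unfolding in_set_conv_nth by blast
      hence "j < i" using ss_less_iff[OF ss j i(1)] by simp
      thus "a \<in> (!) xs ` {j<..<length xs}" using i by auto
    qed
    show "(!) xs ` {j<..<length xs} \<subseteq> {a\<in>set xs. xs!j < a}"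
      using ss_less_iff[OF ss j] by auto
  qed
  moreover have "inj_on ((!) xs) {j<..<length xs}" by (rule inj_on_nth[OF dist]) auto
  ultimately show ?thesis by (simp add: card_image)
qed

lemma interlace_facts:
  assumes il: "strictly_interlace p q" and fp: "finite {x. poly p x = 0}" and fq: "finite {x. poly q x = 0}"
    and t: "poly p t = 0"
  shows "poly q t \<noteq> 0 \<and> card {s\<in>{x. poly q x = 0}. t < s} = card {u\<in>{x. poly p x = 0}. t < u}"
proof -
  define ps where "ps = sorted_roots p"
  define qs where "qs = sorted_roots q"
  have sps: "sorted_wrt (<) ps" "set ps = {x. poly p x = 0}" using fp by (simp_all add: ps_def sorted_roots_def)
  have sqs: "sorted_wrt (<) qs" "set qs = {x. poly q x = 0}" using fq by (simp_all add: qs_def sorted_roots_def)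
  have len: "length qs + 1 = length ps" and ileq: "\<forall>i < length qs. ps ! i < qs ! i \<and> qs ! i < ps ! (i + 1)"
  proof -
    have "length qs + 1 = length ps \<and> (\<forall>i < length qs. ps ! i < qs ! i \<and> qs ! i < ps ! (i + 1))"
      using il unfolding strictly_interlace_def Let_def ps_def qs_def .
    thus "length qs + 1 = length ps" "\<forall>i < length qs. ps ! i < qs ! i \<and> qs ! i < ps ! (i + 1)" by blast+
  qed
  have "t \<in> set ps" using t sps(2) by simp
  then obtain j where j: "j < length ps" "t = ps!j" unfolding in_set_conv_nth by blast
  have key: "ps!j < qs!i \<longleftrightarrow> j \<le> i" and neq: "ps!j \<noteq> qs!i" if i: "i < length qs" for i
  proof -
    have A: "ps!j < qs!i" if "j \<le> i"
    proof -
      have "ps!j \<le> ps!i" using ss_le_iff[OF sps(1) j(1)] i len that by simp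
      moreover have "ps!i < qs!i" using ileq i by blast
      ultimately show ?thesis by linarith
    qed
    have B: "qs!i < ps!j" if "i < j"
    proof -
      have "ps!(i+1) \<le> ps!j" using ss_le_iff[OF sps(1) _ j(1), of "i+1"] i len that by simp
      moreover have "qs!i < ps!(i+1)" using ileq i by blast
      ultimately show ?thesis by linarith
    qed
    show "ps!j < qs!i \<longleftrightarrow> j \<le> i"
    proof (cases "j \<le> i")
      case True thus ?thesis using A by blast
    next
      case False hence "i < j" by simp
      thus ?thesis using B False by (meson less_asym)
    qed
    show "ps!j \<noteq> qs!i"
    proof (cases "j \<le> i")
      case True thus ?thesis using A by (metis less_irrefl)
    next
      case False hence "i < j" by simp
      thus ?thesis using B by (metis less_irrefl)
    qed
  qed
  have "poly q t \<noteq> 0"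
  proof
    assume "poly q t = 0"
    hence "t \<in> set qs" using sqs(2) by simp
    then obtain i where i: "i < length qs" "t = qs!i" unfolding in_set_conv_nth by blast
    have "ps!j \<noteq> qs!i" by (rule neq[OF i(1)])
    thus False using i(2) j(2) by simp
  qed
  moreover have "card {s\<in>{x. poly q x = 0}. t < s} = length ps - 1 - j"
  proof -
    have dist: "distinct qs" using sqs(1) by (simp add: strict_sorted_iff)
    have "{s\<in>{x. poly q x = 0}. t < s} = (!) qs ` {j..<length qs}"
    proof
      show "{s\<in>{x. poly q x = 0}. t < s} \<subseteq> (!) qs ` {j..<length qs}"
      proof
        fix a assume "a \<in> {s\<in>{x. poly q x = 0}. t < s}"
        hence "a \<in> set qs" "t < a" using sqs(2) by auto
        then obtain i where i: "i < length qs" "a = qs!i" "t < qs!i"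
          unfolding in_set_conv_nth by blast
        hence "j \<le> i" using key j by simp
        thus "a \<in> (!) qs ` {j..<length qs}" using i by auto
      qed
      show "(!) qs ` {j..<length qs} \<subseteq> {s\<in>{x. poly q x = 0}. t < s}"
      proof (rule image_subsetI)
        fix i assume "i \<in> {j..<length qs}"
        hence i: "j \<le> i" "i < length qs" by auto
        have "qs!i \<in> set qs" using i(2) by simp
        moreover have "t < qs!i" using key[OF i(2)] i(1) j(2) by simp
        ultimately show "qs!i \<in> {s\<in>{x. poly q x = 0}. t < s}" using sqs(2) by simp
      qed
    qed
    moreover have "inj_on ((!) qs) {j..<length qs}" by (rule inj_on_nth[OF dist]) auto
    ultimately show ?thesis using len by (simp add: card_image)
  qed
  moreover have "card {u\<in>{x. poly p x = 0}. t < u} = length ps - 1 - j"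
    using count_above[OF sps(1) j(1)] sps(2) j(2) by simp
  ultimately show ?thesis by simp
qed



lemma decomp_sign:
  fixes P Q :: "real poly" and R :: "real set"
  assumes fin: "finite R" and P: "P = smult L (\<Prod>u\<in>R. [:-u,1:])" and dQ: "degree Q < card R"
    and sg: "\<forall>t\<in>R. poly (wronskian P Q) t * \<sigma> > 0"
  shows "\<exists>d. (\<forall>t\<in>R. d t > 0) \<and>
     (\<forall>x. poly (wronskian P Q) x * \<sigma> = (\<Sum>t\<in>R. d t * (poly (Pt R t) x)^2)) \<and>
     (\<forall>z. poly (cp (wronskian P Q)) z * complex_of_real \<sigma> =
          (\<Sum>t\<in>R. complex_of_real (d t) * (poly (cp (Pt R t)) z)^2))"
proof -
  define c where "c t = L * (poly Q t / poly (Pt R t) t)" for t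
  define d where "d t = c t * \<sigma>" for t
  have W: "wronskian P Q = (\<Sum>t\<in>R. smult (c t) ((Pt R t)^2))"
    unfolding c_def by (rule wr_decomp[OF fin P dQ])
  have real: "poly (wronskian P Q) x * \<sigma> = (\<Sum>t\<in>R. d t * (poly (Pt R t) x)^2)" for x
    unfolding W d_def by (simp add: poly_sum sum_distrib_right sum_distrib_left mult_ac)
  have cplx: "poly (cp (wronskian P Q)) z * complex_of_real \<sigma> =
          (\<Sum>t\<in>R. complex_of_real (d t) * (poly (cp (Pt R t)) z)^2)" for z
    unfolding W d_def by (simp add: cp_sum cp_smult cp_power poly_sum sum_distrib_right sum_distrib_left mult_ac)
  have pos: "d t > 0" if tR: "t \<in> R" for t
  proof -
    have "(\<Sum>u\<in>R-{t}. d u * (poly (Pt R u) t)^2) = 0"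
      by (rule sum.neutral) (use poly_Pt_other[OF fin tR] in auto)
    hence "poly (wronskian P Q) t * \<sigma> = d t * (poly (Pt R t) t)^2"
      unfolding real by (simp add: sum.remove[OF fin tR])
    moreover have "poly (wronskian P Q) t * \<sigma> > 0" using sg tR by blast
    ultimately have "d t * (poly (Pt R t) t)^2 > 0" by simp
    moreover have "(poly (Pt R t) t)^2 > 0" using poly_Pt_self[OF fin] by simp
    ultimately show ?thesis by (simp add: zero_less_mult_iff)
  qed
  show ?thesis using pos real cplx by blast
qed

lemma pderiv_at_root:
  assumes "finite R" "t \<in> R" "P = smult L (\<Prod>u\<in>R. [:-u,1:])"
  shows "poly (pderiv P) t = L * poly (Pt R t) t"
proof -
  have P: "P = smult L ([:-t,1:] * Pt R t)" using assms Pt_split by simp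
  have "pderiv [:-t,1::real:] = 1" by (simp add: pderiv_pCons)
  hence "pderiv P = smult L ([:-t,1:] * pderiv (Pt R t) + Pt R t)"
    unfolding P pderiv_smult pderiv_mult by (simp only: mult_1_right)
  thus ?thesis by simp
qed

lemma Pt_sign:
  assumes "finite R" "t \<in> R"
  shows "poly (Pt R t) t * (-1)^card {u\<in>R. t < u} > 0"
proof -
  have "{u\<in>R-{t}. t < u} = {u\<in>R. t < u}" by auto
  moreover have "(\<Prod>u\<in>R-{t}. t - u) * (-1)^card {u\<in>R-{t}. t < u} > 0"
    by (rule prod_sign) (use assms in auto)
  ultimately show ?thesis by (simp add: poly_Pt)
qed

lemma neg_of_prod: "(a::real) * b < 0 \<Longrightarrow> b > 0 \<Longrightarrow> a < 0"
  using mult_nonneg_nonneg[of a b] by linarith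

lemma sq_neg1: "((-1::real)^n) * ((-1)^n) = 1"
  by (simp add: power_mult_distrib[symmetric])

lemma omega_ex:
  fixes x y a b :: real
  assumes y: "y \<noteq> 0" and h: "(x-a)*(x-b) + y^2 = 0"
  shows "\<exists>\<omega>. \<forall>t::real. Re (\<omega> / (Complex x y - complex_of_real t)^2) = (t-a)*(t-b) / ((x-t)^2+y^2)^2"
proof -
  define s where "s = ((a+b)/2 - x)/y"
  have hy: "s*y = (a+b)/2 - x" using y by (simp add: s_def)
  have "Re (Complex 1 s / (Complex x y - complex_of_real t)^2) = (t-a)*(t-b) / ((x-t)^2+y^2)^2" for t
  proof -
    have pos: "(x-t)^2+y^2 > 0" using y by (simp add: add_nonneg_pos)
    have e1: "(Complex x y - complex_of_real t)^2 = Complex ((x-t)^2 - y^2) (2*(x-t)*y)"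
      by (simp add: complex_eq_iff power2_eq_square complex_of_real_def algebra_simps)
    have den: "((x-t)^2 - y^2)^2 + (2*(x-t)*y)^2 = ((x-t)^2+y^2)^2"
      by (simp add: power2_eq_square algebra_simps)
    have num: "(x-t)^2 - y^2 + s * (2*(x-t)*y) = (t-a)*(t-b)"
    proof -
      have "s * (2*(x-t)*y) = 2*(x-t)*(s*y)" by (simp add: algebra_simps)
      also have "\<dots> = (x-t)*(a+b-2*x)" by (simp add: hy field_simps)
      finally have e: "s * (2*(x-t)*y) = (x-t)*(a+b-2*x)" .
      have "y^2 = -((x-a)*(x-b))" using h by linarith
      then show ?thesis unfolding e by (simp add: power2_eq_square algebra_simps)
    qed
    show ?thesis unfolding e1 using num den
      by (simp add: Re_divide)
  qed
  thus ?thesis by blast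
qed

lemma Re_of_real_mult: "Re (complex_of_real r * u) = r * Re u" by simp

lemma contra:
  fixes R :: "real set" and c :: "real \<Rightarrow> real" and z \<omega> :: complex
  assumes "finite R" "\<forall>t\<in>R. c t > 0"
    and sum0: "(\<Sum>t\<in>R. complex_of_real (c t) / (z - complex_of_real t)^2) = 0"
    and nn: "\<forall>t\<in>R. Re (\<omega> / (z - complex_of_real t)^2) \<ge> 0"
    and "t0 \<in> R" "Re (\<omega> / (z - complex_of_real t0)^2) > 0"
  shows False
proof -
  have "Re (\<omega> * (\<Sum>t\<in>R. complex_of_real (c t) / (z - complex_of_real t)^2))
      = (\<Sum>t\<in>R. c t * Re (\<omega> / (z - complex_of_real t)^2))"
  proof -
    have "Re (\<omega> * (complex_of_real (c t) / (z - complex_of_real t)^2)) = c t * Re (\<omega> / (z - complex_of_real t)^2)" for t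
    proof -
      have e: "\<omega> * (complex_of_real (c t) / (z - complex_of_real t)^2) = complex_of_real (c t) * (\<omega> / (z - complex_of_real t)^2)"
        by simp
      show ?thesis unfolding e by (rule Re_of_real_mult)
    qed
    thus ?thesis by (simp add: sum_distrib_left Re_sum del: times_divide_eq_right)
  qed
  moreover have "(\<Sum>t\<in>R. c t * Re (\<omega> / (z - complex_of_real t)^2)) > 0"
    by (rule sum_pos2[OF assms(1) assms(5)]) (use assms in auto)
  ultimately show False using sum0 by simp
qed

lemma geo_disk:
  fixes R :: "real set" and c :: "real \<Rightarrow> real" and z :: complex
  assumes fin: "finite R" and cp: "\<forall>t\<in>R. c t > 0"
    and sum0: "(\<Sum>t\<in>R. complex_of_real (c t) / (z - complex_of_real t)^2) = 0"
    and yz: "Im z \<noteq> 0"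
    and ab: "a \<in> R" "b \<in> R" "a < b" and gap: "\<forall>t\<in>R. t \<le> a \<or> b \<le> t"
  shows "z \<notin> ball (complex_of_real ((a+b)/2)) ((b-a)/2)"
proof
  assume zin: "z \<in> ball (complex_of_real ((a+b)/2)) ((b-a)/2)"
  define x where "x = Re z"
  define y where "y = Im z"
  have zxy: "z = Complex x y" by (simp add: x_def y_def)
  have y0: "y \<noteq> 0" using yz y_def by simp
  have "dist (complex_of_real ((a+b)/2)) z < (b-a)/2" using zin by simp
  hence "(dist (complex_of_real ((a+b)/2)) z)^2 < ((b-a)/2)^2"
    by (intro power_strict_mono) auto
  hence "((a+b)/2 - x)^2 + y^2 < ((b-a)/2)^2"
    by (simp add: dist_norm cmod_power2 zxy complex_of_real_def)
  hence lt: "(x-a)*(x-b) + y^2 < 0" by (simp add: power2_eq_square field_simps)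
  have y2: "y^2 > 0" using y0 by simp
  have xa: "x - a > 0"
  proof (rule ccontr)
    assume "\<not> x - a > 0"
    hence "x - b < 0" using ab by linarith
    hence "(x-a)*(x-b) \<ge> 0" using \<open>\<not> x - a > 0\<close> by (simp add: mult_nonpos_nonpos)
    thus False using lt y2 by linarith
  qed
  define b' where "b' = x + y^2/(x-a)"
  have eq0: "(x-a)*(x-b') + y^2 = 0" using xa by (simp add: b'_def field_simps)
  have "b' - b = ((x-a)*(x-b) + y^2)/(x-a)" using xa by (simp add: b'_def field_simps)
  moreover have "((x-a)*(x-b) + y^2)/(x-a) < 0" using lt xa by (simp add: divide_neg_pos)
  ultimately have b'b: "b' < b" by linarith
  have "y^2/(x-a) > 0" using xa y2 by simp
  hence b'a: "b' > a" using xa by (simp add: b'_def)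
  obtain \<omega> where om: "\<And>t. Re (\<omega> / (Complex x y - complex_of_real t)^2) = (t-a)*(t-b') / ((x-t)^2+y^2)^2"
    using omega_ex[OF y0 eq0] by blast
  have pos: "((x-t)^2+y^2)^2 > 0" for t using y2 by (simp add: add_nonneg_pos)
  show False
  proof (rule contra[OF fin cp sum0, of \<omega> b])
    show "\<forall>t\<in>R. 0 \<le> Re (\<omega> / (z - complex_of_real t)^2)"
    proof
      fix t assume "t \<in> R"
      hence "(t-a)*(t-b') \<ge> 0" using gap b'b b'a
      proof -
        have "t \<le> a \<or> b \<le> t" using gap \<open>t \<in> R\<close> by blast
        thus ?thesis
        proof
          assume "t \<le> a" thus ?thesis using b'a by (intro mult_nonpos_nonpos) auto
        next
          assume "b \<le> t" thus ?thesis using b'b ab by (intro mult_nonneg_nonneg) auto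
        qed
      qed
      thus "0 \<le> Re (\<omega> / (z - complex_of_real t)^2)" unfolding zxy om using pos[of t] by simp
    qed
    show "b \<in> R" using ab by simp
    have "(b-a)*(b-b') > 0" using ab b'b by simp
    thus "0 < Re (\<omega> / (z - complex_of_real b)^2)" unfolding zxy om using pos[of b] by simp
  qed
qed

lemma geo_closure:
  fixes R :: "real set" and c :: "real \<Rightarrow> real" and z :: complex
  assumes fin: "finite R" and cp: "\<forall>t\<in>R. c t > 0"
    and sum0: "(\<Sum>t\<in>R. complex_of_real (c t) / (z - complex_of_real t)^2) = 0"
    and yz: "Im z \<noteq> 0"
    and ab: "a \<in> R" "b \<in> R" "a < b" and inside: "\<forall>t\<in>R. a \<le> t \<and> t \<le> b"
  shows "z \<in> cball (complex_of_real ((a+b)/2)) ((b-a)/2)"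
proof (rule ccontr)
  assume zin: "z \<notin> cball (complex_of_real ((a+b)/2)) ((b-a)/2)"
  define x where "x = Re z"
  define y where "y = Im z"
  have zxy: "z = Complex x y" by (simp add: x_def y_def)
  have y0: "y \<noteq> 0" using yz y_def by simp
  have "dist (complex_of_real ((a+b)/2)) z > (b-a)/2" using zin by simp
  hence "(dist (complex_of_real ((a+b)/2)) z)^2 > ((b-a)/2)^2"
    using ab by (intro power_strict_mono) auto
  hence "((a+b)/2 - x)^2 + y^2 > ((b-a)/2)^2"
    by (simp add: dist_norm cmod_power2 zxy complex_of_real_def)
  hence gt: "(x-a)*(x-b) + y^2 > 0" by (simp add: power2_eq_square field_simps)
  have y2: "y^2 > 0" using y0 by simp
  have pos: "((x-t)^2+y^2)^2 > 0" for t using y2 by (simp add: add_nonneg_pos)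
  obtain a' b' where eq0: "(x-a')*(x-b') + y^2 = 0" and a'a: "a' \<le> a" and bb': "b \<le> b'"
     and strict: "a' < a \<or> b < b'"
  proof (cases "x > a")
    case True
    define b' where "b' = x + y^2/(x-a)"
    have "(x-a)*(x-b') + y^2 = 0" using True by (simp add: b'_def field_simps)
    moreover have "b' - b = ((x-a)*(x-b) + y^2)/(x-a)" using True by (simp add: b'_def field_simps)
    moreover have "((x-a)*(x-b) + y^2)/(x-a) > 0" using gt True by simp
    ultimately show ?thesis using that[of a b'] by simp
  next
    case False
    define a' where "a' = x - y^2/(b-x)"
    have bx: "b - x > 0" using False ab by simp
    have "(x-a')*(x-b) + y^2 = 0" using bx by (simp add: a'_def field_simps)
    moreover have "y^2/(b-x) > 0" using bx y2 by simp
    hence "a' < a" using False by (simp add: a'_def)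
    ultimately show ?thesis using that[of a' b] by simp
  qed
  obtain \<omega> where om: "\<And>t. Re (\<omega> / (Complex x y - complex_of_real t)^2) = (t-a')*(t-b') / ((x-t)^2+y^2)^2"
    using omega_ex[OF y0 eq0] by blast
  have om': "Re (-\<omega> / (Complex x y - complex_of_real t)^2) = (t-a')*(b'-t) / ((x-t)^2+y^2)^2" for t
  proof -
    have "Re (-\<omega> / (Complex x y - complex_of_real t)^2) = - Re (\<omega> / (Complex x y - complex_of_real t)^2)"
      by simp
    also have "\<dots> = (t-a')*(b'-t) / ((x-t)^2+y^2)^2" unfolding om by (simp add: algebra_simps minus_divide_left)
    finally show ?thesis .
  qed
  have nn: "\<forall>t\<in>R. 0 \<le> Re (-\<omega> / (z - complex_of_real t)^2)"
  proof
    fix t assume "t \<in> R"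
    hence "(t-a')*(b'-t) \<ge> 0" using inside a'a bb' by (intro mult_nonneg_nonneg) force+
    thus "0 \<le> Re (-\<omega> / (z - complex_of_real t)^2)" unfolding zxy om' using pos[of t] by simp
  qed
  from strict show False
  proof
    assume "a' < a"
    have "(a-a')*(b'-a) > 0" using \<open>a' < a\<close> ab bb' by simp
    hence "0 < Re (-\<omega> / (z - complex_of_real a)^2)" unfolding zxy om' using pos[of a] by simp
    thus False by (rule contra[OF fin cp sum0 nn ab(1)])
  next
    assume "b < b'"
    have "(b-a')*(b'-b) > 0" using \<open>b < b'\<close> ab a'a by simp
    hence "0 < Re (-\<omega> / (z - complex_of_real b)^2)" unfolding zxy om' using pos[of b] by simp
    thus False by (rule contra[OF fin cp sum0 nn ab(2)])
  qed
qed


theorem mainTheorem2: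
  fixes p q :: "real poly" and k :: nat
  assumes "k \<ge> 2"
    and "degree p = k" and "degree q = k - 1"
    and "real_simple_rooted p" and "real_simple_rooted q"
    and "strictly_interlace p q"
  shows "\<forall>z. poly (map_poly complex_of_real (wronskian p q)) z = 0 \<longrightarrow>
           z \<in> (\<Inter>\<alpha>. Omega p q \<alpha>)"
proof (intro allI impI)
  fix z assume Wz: "poly (map_poly complex_of_real (wronskian p q)) z = 0"
  note k2 = assms(1) and dp = assms(2) and dq = assms(3)
  define Rp where "Rp = {x. poly p x = 0}"
  define Rq where "Rq = {x. poly q x = 0}"
  define W where "W = wronskian p q"
  define L where "L = lead_coeff p"
  define M where "M = lead_coeff q"
  define \<sigma> where "\<sigma> = L * M"
  have p0: "p \<noteq> 0" and q0: "q \<noteq> 0" using assms(4,5) by (simp_all add: real_simple_rooted_def)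
  have finRp: "finite Rp" using poly_roots_finite[OF p0] by (simp add: Rp_def)
  have finRq: "finite Rq" using poly_roots_finite[OF q0] by (simp add: Rq_def)
  have cRp: "card Rp = k" using rsr_card[OF assms(4)] dp by (simp add: Rp_def)
  have cRq: "card Rq = k - 1" using rsr_card[OF assms(5)] dq by (simp add: Rq_def)
  have L0: "L \<noteq> 0" and M0: "M \<noteq> 0" using p0 q0 by (simp_all add: L_def M_def)
  have pf: "p = smult L (\<Prod>u\<in>Rp. [:-u,1:])"
    unfolding L_def Rp_def by (rule factor_full[OF p0 rsr_card[OF assms(4)]])
  have qf: "q = smult M (\<Prod>u\<in>Rq. [:-u,1:])"
    unfolding M_def Rq_def by (rule factor_full[OF q0 rsr_card[OF assms(5)]])
  have ilf: "poly q t \<noteq> 0 \<and> card {s\<in>Rq. t < s} = card {u\<in>Rp. t < u}" if "t \<in> Rp" for t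
    using interlace_facts[OF assms(6)] finRp finRq that by (simp add: Rp_def Rq_def)
  have S1: "\<forall>t\<in>Rp. poly W t * \<sigma> > 0"
  proof
    fix t assume tR: "t \<in> Rp"
    define A where "A = poly (Pt Rp t) t"
    define B where "B = (\<Prod>s\<in>Rq. t - s)"
    define e where "e = (-1::real)^card {u\<in>Rp. t < u}"
    have pt: "poly p t = 0" using tR by (simp add: Rp_def)
    have "poly W t = poly (pderiv p) t * poly q t" using pt by (simp add: W_def wronskian_def)
    also have "poly (pderiv p) t = L * A" unfolding A_def by (rule pderiv_at_root[OF finRp tR pf])
    also have "poly q t = M * B" by (subst qf) (simp add: B_def poly_prod)
    finally have Wt: "poly W t = L * A * (M * B)" .
    have Ae: "A * e > 0" unfolding A_def e_def by (rule Pt_sign[OF finRp tR])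
    have "t \<notin> Rq" using ilf[OF tR] by (simp add: Rq_def)
    hence "B * (-1)^card {s\<in>Rq. t < s} > 0" unfolding B_def by (rule prod_sign[OF finRq])
    hence Be: "B * e > 0" using ilf[OF tR] by (simp add: e_def)
    have "(A*e)*(B*e) > 0" using Ae Be by simp
    hence "A * B > 0" using sq_neg1 by (simp add: e_def mult_ac)
    moreover have "poly W t * \<sigma> = (L*M)^2 * (A*B)" unfolding Wt \<sigma>_def by (simp add: power2_eq_square mult_ac)
    moreover have "(L*M)^2 > 0" using L0 M0 by simp
    ultimately show "poly W t * \<sigma> > 0" by simp
  qed
  have dqR: "degree q < card Rp" using dq cRp k2 by simp
  obtain d0 where d0pos: "\<forall>t\<in>Rp. d0 t > 0"
    and d0r: "\<forall>x. poly W x * \<sigma> = (\<Sum>t\<in>Rp. d0 t * (poly (Pt Rp t) x)^2)"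
    using decomp_sign[OF finRp pf dqR, of \<sigma>] S1 unfolding W_def by blast
  have S3: "poly W x * \<sigma> > 0" for x
  proof -
    have "Rp \<noteq> {}" using cRp k2 by auto
    then obtain t0 where t0: "t0 \<in> Rp" "x \<notin> Rp - {t0}"
      by (cases "x \<in> Rp") auto
    have "poly (Pt Rp t0) x \<noteq> 0" using t0 finRp by (simp add: poly_Pt)
    hence "d0 t0 * (poly (Pt Rp t0) x)^2 > 0" using d0pos t0 by simp
    hence "(\<Sum>t\<in>Rp. d0 t * (poly (Pt Rp t) x)^2) > 0"
      by (intro sum_pos2[OF finRp t0(1)]) (use d0pos in auto)
    thus ?thesis using d0r by simp
  qed
  have Imz: "Im z \<noteq> 0"
  proof
    assume "Im z = 0"
    hence "z = complex_of_real (Re z)" by (simp add: complex_eq_iff)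
    hence "complex_of_real (poly W (Re z)) = 0" using Wz poly_cp_real[of W "Re z"] by (simp add: W_def)
    thus False using S3[of "Re z"] by simp
  qed
  show "z \<in> (\<Inter>\<alpha>. Omega p q \<alpha>)"
  proof (rule INT_I)
    fix \<alpha> :: real
    define P where "P = p + smult \<alpha> q"
    define RP where "RP = {x. poly P x = 0}"
    have dsq: "degree (smult \<alpha> q) < degree p" using dq dp k2 degree_smult_le[of \<alpha> q] by linarith
    have dP: "degree P = k" unfolding P_def using degree_add_eq_left[OF dsq] dp by simp
    have lP: "lead_coeff P = L" unfolding P_def L_def
      using lead_coeff_add_le[OF dsq] by (simp add: add.commute)
    have WP: "wronskian P q = W"
      unfolding P_def W_def wronskian_def by (simp add: pderiv_add pderiv_smult algebra_simps)
    have sgS: "\<forall>s\<in>Rq. poly P s * lead_coeff P * (-1)^card {u\<in>Rq. s < u} < 0"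
    proof
      fix s assume sR: "s \<in> Rq"
      define C where "C = poly (Pt Rq s) s"
      define e where "e = (-1::real)^card {u\<in>Rq. s < u}"
      have qs: "poly q s = 0" using sR by (simp add: Rq_def)
      have Ps: "poly P s = poly p s" using qs by (simp add: P_def)
      have "poly W s = - (poly (pderiv q) s * poly p s)" using qs by (simp add: W_def wronskian_def)
      also have "poly (pderiv q) s = M * C" unfolding C_def by (rule pderiv_at_root[OF finRq sR qf])
      finally have Ws: "poly W s = - (M * C * poly p s)" .
      have "M^2 * (poly p s * L * C) < 0" using S3[of s] unfolding Ws \<sigma>_def
        by (simp add: power2_eq_square mult_ac)
      moreover have "M^2 > 0" using M0 by simp
      ultimately have neg: "poly p s * L * C < 0" by (simp add: mult_less_0_iff)
      have Ce: "C * e > 0" unfolding C_def e_def by (rule Pt_sign[OF finRq sR])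
      have eqn: "(poly p s * L * e) * (C * e) = poly p s * L * C" using sq_neg1 by (simp add: e_def mult_ac)
      have "(poly p s * L * e) * (C * e) < 0" using neg eqn by linarith
      hence "poly p s * L * e < 0" using Ce by (rule neg_of_prod)
      thus "poly P s * lead_coeff P * (-1)^card {u\<in>Rq. s < u} < 0" by (simp add: Ps lP e_def)
    qed
    have P0: "P \<noteq> 0" using dP k2 by auto
    have "k \<le> card RP" unfolding RP_def by (rule root_count[OF finRq cRq k2 dP sgS])
    moreover have "card RP \<le> k" using card_poly_roots_bound[OF P0] dP by (simp add: RP_def)
    ultimately have cRP: "card RP = k" by simp
    have finRP: "finite RP" using poly_roots_finite[OF P0] by (simp add: RP_def)
    have Pf: "P = smult L (\<Prod>u\<in>RP. [:-u,1:])"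
      using factor_full[OF P0] cRP dP lP by (simp add: RP_def)
    have dqRP: "degree q < card RP" using dq cRP k2 by simp
    obtain d where dpos: "\<forall>t\<in>RP. d t > 0"
      and dc: "\<forall>z. poly (cp (wronskian P q)) z * complex_of_real \<sigma> =
          (\<Sum>t\<in>RP. complex_of_real (d t) * (poly (cp (Pt RP t)) z)^2)"
      using decomp_sign[OF finRP Pf dqRP, of \<sigma>] S3 unfolding WP by blast
    have sum0: "(\<Sum>t\<in>RP. complex_of_real (d t) / (z - complex_of_real t)^2) = 0"
    proof -
      define D where "D = (\<Prod>u\<in>RP. z - complex_of_real u)"
      have fnz: "z - complex_of_real u \<noteq> 0" for u using Imz by (auto simp: complex_eq_iff)
      have D0: "D \<noteq> 0" unfolding D_def using fnz finRP by simp
      have pcp: "poly (cp (Pt RP t)) z = D / (z - complex_of_real t)" if "t \<in> RP" for t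
      proof -
        have "poly (cp (Pt RP t)) z = (\<Prod>u\<in>RP-{t}. z - complex_of_real u)"
          unfolding Pt_def cp_prod cp_lin by (simp add: poly_prod)
        moreover have "D = (z - complex_of_real t) * (\<Prod>u\<in>RP-{t}. z - complex_of_real u)"
          unfolding D_def using finRP that by (simp add: prod.remove)
        ultimately show ?thesis using fnz[of t] by simp
      qed
      have "0 = (\<Sum>t\<in>RP. complex_of_real (d t) * (poly (cp (Pt RP t)) z)^2)"
        using dc[rule_format, of z] Wz by (simp add: WP W_def)
      also have "\<dots> = (\<Sum>t\<in>RP. D^2 * (complex_of_real (d t) / (z - complex_of_real t)^2))"
        by (rule sum.cong[OF refl]) (simp add: pcp power_divide)
      also have "\<dots> = D^2 * (\<Sum>t\<in>RP. complex_of_real (d t) / (z - complex_of_real t)^2)"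
        by (simp add: sum_distrib_left)
      finally show ?thesis using D0 by simp
    qed
    define r where "r = sorted_roots P"
    have sr: "sorted_wrt (<) r" "set r = RP" using finRP by (simp_all add: r_def sorted_roots_def RP_def)
    have lr: "length r = k" using finRP cRP by (simp add: r_def sorted_roots_def RP_def)
    have inR: "r!i \<in> RP" if "i < k" for i using sr(2) lr that by (metis nth_mem)
    have idx: "\<exists>i<k. t = r!i" if "t \<in> RP" for t
      using that sr(2) lr by (metis in_set_conv_nth)
    have part1: "z \<in> closure (diam_disk (r!0) (r!(k-1)))"
    proof -
      have lt: "r!0 < r!(k-1)" using ss_less_iff[OF sr(1), of 0 "k-1"] lr k2 by simp
      have "z \<in> cball (complex_of_real ((r!0 + r!(k-1))/2)) ((r!(k-1) - r!0)/2)"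
      proof (rule geo_closure[OF finRP dpos sum0 Imz inR inR lt])
        show "\<forall>t\<in>RP. r!0 \<le> t \<and> t \<le> r!(k-1)"
        proof
          fix t assume "t \<in> RP"
          then obtain i where i: "i < k" "t = r!i" using idx by blast
          show "r!0 \<le> t \<and> t \<le> r!(k-1)"
            using ss_le_iff[OF sr(1), of 0 i] ss_le_iff[OF sr(1), of i "k-1"] i lr by simp
        qed
      qed (use k2 in auto)
      thus ?thesis unfolding diam_disk_def using lt by (simp add: closure_ball)
    qed
    have part2: "z \<notin> diam_disk (r!j) (r!(j+1))" if j: "j < k - 1" for j
    proof -
      have lt: "r!j < r!(j+1)" using ss_less_iff[OF sr(1), of j "j+1"] lr j by simp
      have "z \<notin> ball (complex_of_real ((r!j + r!(j+1))/2)) ((r!(j+1) - r!j)/2)"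
      proof (rule geo_disk[OF finRP dpos sum0 Imz inR inR lt])
        show "\<forall>t\<in>RP. t \<le> r!j \<or> r!(j+1) \<le> t"
        proof
          fix t assume "t \<in> RP"
          then obtain i where i: "i < k" "t = r!i" using idx by blast
          show "t \<le> r!j \<or> r!(j+1) \<le> t"
          proof (cases "i \<le> j")
            case True thus ?thesis using ss_le_iff[OF sr(1), of i j] i lr j by simp
          next
            case False thus ?thesis using ss_le_iff[OF sr(1), of "j+1" i] i lr j by simp
          qed
        qed
      qed (use j in auto)
      thus ?thesis unfolding diam_disk_def .
    qed
    show "z \<in> Omega p q \<alpha>"
      unfolding Omega_def Let_def P_def[symmetric] r_def[symmetric] lr
      using part1 part2 by auto
  qed
qed


end
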